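(* Let $p=p(n)\in[0,1]$ satisfy $p n/(\log_2 n)^2\to\infty$ as $n\to\infty$. Then asymptotically almost surely (i.e. with probability tending to $1$ as $n\to\infty$), $$\chi'_{\rm ccf}(\mathbb{G}_{n,p})\ge\log_2(pn)-2\log_2\log_2 n\quad\text{and}\quad\chi'_{\rm ocf}(\mathbb{G}_{n,p})\ge\log_2(pn)-2\log_2\log_2 n.$$
   Context: $\mathbb{G}_{n,p}$ is the binomial random graph on vertex set $[n]$ in which each pair of vertices is joined independently with probability $p$. For an edge $e=uv$ of a graph $G=(V,E)$, $E[e]$ is the set of edges incident with $u$ or $v$ and $E(e)=E[e]\setminus\{e\}$. An edge colouring is closed conflict-free if for every edge $e$ some colour is assigned to exactly one edge of $E[e]$, and open conflict-free if for every edge $e$ with $E(e)\ne\emptyset$ some colour is assigned to exactly one edge of $E(e)$. $\chi'_{\rm ccf}(G)$ and $\chi'_{\rm ocf}(G)$ denote the minimum numbers of colours in such colourings, respectively. *)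

theory Defs
  imports Complex_Main
begin

text \<open>Simple graphs on vertex set [n] = {1..n}: a graph is a set of edges, each edge
  a two-element set of vertices.\<close>

definition all_edges :: "nat \<Rightarrow> nat set set" where
  "all_edges n = {e. \<exists>u v. u \<in> {1..n} \<and> v \<in> {1..n} \<and> u \<noteq> v \<and> e = {u, v}}"

text \<open>Probability that the binomial random graph G(n,p) satisfies property P.\<close>

definition gnp_prob :: "nat \<Rightarrow> real \<Rightarrow> (nat set set \<Rightarrow> bool) \<Rightarrow> real" where
  "gnp_prob n p P =
     (\<Sum>E\<in>Pow (all_edges n).
        if P E then p ^ card E * (1 - p) ^ (card (all_edges n) - card E) else 0)"

text \<open>E[e]: edges incident with an endpoint of e (including e); E(e) = E[e] minus e.\<close>

definition closed_nbhd :: "nat set set \<Rightarrow> nat set \<Rightarrow> nat set set" where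
  "closed_nbhd E e = {f \<in> E. f \<inter> e \<noteq> {}}"

definition open_nbhd :: "nat set set \<Rightarrow> nat set \<Rightarrow> nat set set" where
  "open_nbhd E e = closed_nbhd E e - {e}"

definition closed_cf_colouring :: "nat set set \<Rightarrow> nat \<Rightarrow> (nat set \<Rightarrow> nat) \<Rightarrow> bool" where
  "closed_cf_colouring E k c \<longleftrightarrow>
     (\<forall>e\<in>E. c e < k) \<and>
     (\<forall>e\<in>E. \<exists>col. card {f \<in> closed_nbhd E e. c f = col} = 1)"

definition open_cf_colouring :: "nat set set \<Rightarrow> nat \<Rightarrow> (nat set \<Rightarrow> nat) \<Rightarrow> bool" where
  "open_cf_colouring E k c \<longleftrightarrow>
     (\<forall>e\<in>E. c e < k) \<and>
     (\<forall>e\<in>E. open_nbhd E e \<noteq> {} \<longrightarrow> (\<exists>col. card {f \<in> open_nbhd E e. c f = col} = 1))"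

definition chi_ccf :: "nat set set \<Rightarrow> nat" where
  "chi_ccf E = (LEAST k. \<exists>c. closed_cf_colouring E k c)"

definition chi_ocf :: "nat set set \<Rightarrow> nat" where
  "chi_ocf E = (LEAST k. \<exists>c. open_cf_colouring E k c)"

end

theory Submission
  imports Defs "HOL-Real_Asymp.Real_Asymp"
begin


lemma edge_form: "e \<in> all_edges n \<Longrightarrow> \<exists>u v. u \<noteq> v \<and> e = {u,v} \<and> u \<in> {1..n} \<and> v \<in> {1..n}"
  unfolding all_edges_def by blast

lemma edge_eq: "g \<in> all_edges n \<Longrightarrow> u \<in> g \<Longrightarrow> v \<in> g \<Longrightarrow> u \<noteq> v \<Longrightarrow> g = {u,v}"
  unfolding all_edges_def by blast

lemma finite_all_edges: "finite (all_edges n)"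
proof -
  have "all_edges n \<subseteq> Pow {1..n}" unfolding all_edges_def by auto
  then show ?thesis by (rule finite_subset) auto
qed

definition colset :: "nat set set \<Rightarrow> (nat set \<Rightarrow> nat) \<Rightarrow> nat \<Rightarrow> nat set" where
  "colset E c v = c ` {f \<in> E. v \<in> f}"

definition uniq_at :: "nat set set \<Rightarrow> (nat set \<Rightarrow> nat) \<Rightarrow> nat \<Rightarrow> nat set \<Rightarrow> bool" where
  "uniq_at E c w e \<longleftrightarrow> (\<forall>f\<in>E. w \<in> f \<and> c f = c e \<longrightarrow> f = e)"

lemma uniq_closed:
  assumes EU: "E \<subseteq> all_edges n" and cf: "closed_cf_colouring E k c" and eE: "e \<in> E"
    and e: "e = {u,v}" "u \<noteq> v" and cs: "colset E c u = colset E c v"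
  shows "\<exists>w\<in>e. uniq_at E c w e"
proof (rule ccontr)
  assume "\<not> ?thesis"
  then obtain f1 f2 where f1: "f1 \<in> E" "u \<in> f1" "c f1 = c e" "f1 \<noteq> e"
    and f2: "f2 \<in> E" "v \<in> f2" "c f2 = c e" "f2 \<noteq> e"
    using e unfolding uniq_at_def by blast
  have fin: "finite E" using EU finite_all_edges finite_subset by blast
  obtain col where "card {f \<in> closed_nbhd E e. c f = col} = 1" using cf eE
    unfolding closed_cf_colouring_def by blast
  then obtain g where X: "{f \<in> closed_nbhd E e. c f = col} = {g}" by (rule card_1_singletonE)
  have gE: "g \<in> E" "g \<inter> e \<noteq> {}" "c g = col" using X unfolding closed_nbhd_def by auto
  show False
  proof (cases "col = c e")
    case True
    have "e \<in> {f \<in> closed_nbhd E e. c f = col}" "f1 \<in> {f \<in> closed_nbhd E e. c f = col}"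
      using eE f1 True e unfolding closed_nbhd_def by auto
    then show False using X f1(4) by auto
  next
    case False
    have ge: "g \<noteq> e" using False gE by auto
    have "\<exists>w w'. w \<in> g \<and> {w,w'} = {u,v}" using gE e by auto
    then obtain w w' where w: "w \<in> g" "{w,w'} = {u,v}" by blast
    have "colset E c w = colset E c w'" using w(2) cs e by (auto simp: doubleton_eq_iff)
    moreover have "col \<in> colset E c w" using gE w unfolding colset_def by auto
    ultimately obtain g' where g': "g' \<in> E" "w' \<in> g'" "c g' = col" unfolding colset_def by auto
    have "g' \<in> {f \<in> closed_nbhd E e. c f = col}" using g' w e unfolding closed_nbhd_def
      by (auto simp: doubleton_eq_iff)
    then have "g' = g" using X by auto
    then have "g = {w,w'}" using edge_eq[of g n w w'] g' w gE EU e by (auto simp: doubleton_eq_iff)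
    then show False using ge w e by auto
  qed
qed

lemma uniq_open:
  assumes EU: "E \<subseteq> all_edges n" and cf: "open_cf_colouring E k c" and eE: "e \<in> E"
    and e: "e = {u,v}" "u \<noteq> v" and cs: "colset E c u = colset E c v"
  shows "\<exists>w\<in>e. uniq_at E c w e"
proof (rule ccontr)
  assume "\<not> ?thesis"
  then obtain f1 f2 where f1: "f1 \<in> E" "u \<in> f1" "c f1 = c e" "f1 \<noteq> e"
    and f2: "f2 \<in> E" "v \<in> f2" "c f2 = c e" "f2 \<noteq> e"
    using e unfolding uniq_at_def by blast
  have "f1 \<in> open_nbhd E e" using f1 e unfolding open_nbhd_def closed_nbhd_def by auto
  then obtain col where "card {f \<in> open_nbhd E e. c f = col} = 1" using cf eE
    unfolding open_cf_colouring_def by blast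
  then obtain g where X: "{f \<in> open_nbhd E e. c f = col} = {g}" by (rule card_1_singletonE)
  have gE: "g \<in> E" "g \<inter> e \<noteq> {}" "c g = col" "g \<noteq> e"
    using X unfolding open_nbhd_def closed_nbhd_def by auto
  show False
  proof (cases "col = c e")
    case True
    have "f2 \<in> {f \<in> open_nbhd E e. c f = col}" "f1 \<in> {f \<in> open_nbhd E e. c f = col}"
      using f1 f2 True e unfolding open_nbhd_def closed_nbhd_def by auto
    then have "f1 = f2" using X by auto
    then have "f1 = {u,v}" using edge_eq[of f1 n u v] f1 f2 EU e by auto
    then show False using f1 e by auto
  next
    case False
    have "\<exists>w w'. w \<in> g \<and> {w,w'} = {u,v}" using gE e by auto
    then obtain w w' where w: "w \<in> g" "{w,w'} = {u,v}" by blast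
    have "colset E c w = colset E c w'" using w(2) cs e by (auto simp: doubleton_eq_iff)
    moreover have "col \<in> colset E c w" using gE w unfolding colset_def by auto
    ultimately obtain g' where g': "g' \<in> E" "w' \<in> g'" "c g' = col" unfolding colset_def by auto
    have "g' \<noteq> e" using g' False by auto
    then have "g' \<in> {f \<in> open_nbhd E e. c f = col}" using g' w e unfolding open_nbhd_def closed_nbhd_def
      by (auto simp: doubleton_eq_iff)
    then have "g' = g" using X by auto
    then have "g = {w,w'}" using edge_eq[of g n w w'] g' w gE EU e by (auto simp: doubleton_eq_iff)
    then show False using gE w e by auto
  qed
qed

lemma count_edges:
  assumes fin: "finite A" and U: "\<forall>e\<in>E. e \<subseteq> A \<longrightarrow> (\<exists>w\<in>e. uniq_at E c w e)"
    and ck: "\<forall>e\<in>E. c e < k"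
  shows "card {e\<in>E. e \<subseteq> A} \<le> k * card A"
proof -
  define phi where "phi e = ((SOME w. w \<in> e \<and> uniq_at E c w e), c e)" for e
  have P: "(SOME w. w \<in> e \<and> uniq_at E c w e) \<in> e \<and> uniq_at E c (SOME w. w \<in> e \<and> uniq_at E c w e) e"
    if "e \<in> {e\<in>E. e \<subseteq> A}" for e
    using U that by (metis (mono_tags, lifting) mem_Collect_eq someI)
  have "inj_on phi {e\<in>E. e \<subseteq> A}"
  proof (rule inj_onI)
    fix x y assume x: "x \<in> {e\<in>E. e \<subseteq> A}" and y: "y \<in> {e\<in>E. e \<subseteq> A}" and xy: "phi x = phi y"
    show "x = y" using P[OF x] P[OF y] xy x y unfolding phi_def uniq_at_def by auto
  qed
  moreover have "phi ` {e\<in>E. e \<subseteq> A} \<subseteq> A \<times> {..<k}" using P ck unfolding phi_def by fastforce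
  ultimately have "card {e\<in>E. e \<subseteq> A} \<le> card (A \<times> {..<k})"
    by (rule card_inj_on_le) (use fin in auto)
  then show ?thesis by (simp add: card_cartesian_product mult.commute)
qed

lemma det_main:
  assumes EU: "E \<subseteq> all_edges n"
    and cf: "closed_cf_colouring E k c \<or> open_cf_colouring E k c"
  shows "\<exists>A \<subseteq> {1..n}. real n \<le> real (card A) * 2 ^ k \<and> card {e\<in>E. e \<subseteq> A} \<le> k * card A"
proof -
  have ck: "\<forall>e\<in>E. c e < k" using cf unfolding closed_cf_colouring_def open_cf_colouring_def by auto
  have sub: "colset E c ` {1..n} \<subseteq> Pow {..<k}" using ck unfolding colset_def by auto
  have "(\<Sum>S\<in>Pow {..<k}. card {v\<in>{1..n}. colset E c v = S}) = card {1..n}"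
    using sum.group[of "{1..n}" "Pow {..<k}" "colset E c" "\<lambda>_. 1::nat"] sub by simp
  then have sumeq: "(\<Sum>S\<in>Pow {..<k}. card {v\<in>{1..n}. colset E c v = S}) = n" by simp
  have "\<exists>S\<in>Pow {..<k}. real n \<le> real (card {v\<in>{1..n}. colset E c v = S}) * 2 ^ k"
  proof (rule ccontr)
    assume "\<not> ?thesis"
    then have "\<forall>S\<in>Pow {..<k}. real (card {v\<in>{1..n}. colset E c v = S}) < real n / 2 ^ k"
      by (auto simp: field_simps not_le)
    then have "(\<Sum>S\<in>Pow {..<k}. real (card {v\<in>{1..n}. colset E c v = S})) < (\<Sum>S\<in>Pow {..<k}. real n / 2 ^ k)"
      by (intro sum_strict_mono) auto
    also have "\<dots> = real n" by (simp add: card_Pow)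
    finally show False using sumeq by (metis of_nat_sum less_irrefl)
  qed
  then obtain S where S: "real n \<le> real (card {v\<in>{1..n}. colset E c v = S}) * 2 ^ k" by blast
  define A where "A = {v\<in>{1..n}. colset E c v = S}"
  have "\<forall>e\<in>E. e \<subseteq> A \<longrightarrow> (\<exists>w\<in>e. uniq_at E c w e)"
  proof (intro ballI impI)
    fix e assume eE: "e \<in> E" and eA: "e \<subseteq> A"
    obtain u v where uv: "u \<noteq> v" "e = {u,v}" using edge_form eE EU by blast
    have "colset E c u = colset E c v" using eA uv unfolding A_def by auto
    then show "\<exists>w\<in>e. uniq_at E c w e" using uniq_closed[OF EU _ eE uv(2,1)] uniq_open[OF EU _ eE uv(2,1)] cf
      by blast
  qed
  then have "card {e\<in>E. e \<subseteq> A} \<le> k * card A" by (intro count_edges[OF _ _ ck]) (auto simp: A_def)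
  moreover have "A \<subseteq> {1..n}" unfolding A_def by auto
  ultimately show ?thesis using S unfolding A_def by blast
qed



lemmas finite_all_edges' = finite_all_edges

definition wt :: "nat \<Rightarrow> real \<Rightarrow> nat set set \<Rightarrow> real" where
  "wt n p E = p ^ card E * (1 - p) ^ (card (all_edges n) - card E)"

lemma gnp_wt: "gnp_prob n p P = (\<Sum>E\<in>Pow (all_edges n). if P E then wt n p E else 0)"
  unfolding gnp_prob_def wt_def by simp

lemma wt_nonneg: "0 \<le> p \<Longrightarrow> p \<le> 1 \<Longrightarrow> 0 \<le> wt n p E"
  unfolding wt_def by simp

lemma wt_prod: assumes "E \<subseteq> all_edges n"
  shows "wt n p E = (\<Prod>e\<in>E. p) * (\<Prod>e\<in>all_edges n - E. 1 - p)"
proof -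
  have "finite E" using assms finite_all_edges' finite_subset by blast
  then show ?thesis unfolding wt_def using assms finite_all_edges'
    by (simp add: card_Diff_subset)
qed

lemma wt_total: "(\<Sum>E\<in>Pow (all_edges n). wt n p E) = 1"
proof -
  have "(\<Sum>E\<in>Pow (all_edges n). wt n p E) =
        (\<Sum>E\<in>Pow (all_edges n). (\<Prod>e\<in>E. p) * (\<Prod>e\<in>all_edges n - E. 1 - p))"
    by (rule sum.cong) (auto simp: wt_prod)
  also have "\<dots> = (\<Prod>e\<in>all_edges n. p + (1 - p))"
    by (rule prod_add[symmetric]) (rule finite_all_edges')
  finally show ?thesis by simp
qed

lemma gnp_compl: "gnp_prob n p P = 1 - gnp_prob n p (\<lambda>E. \<not> P E)"
proof -
  have "gnp_prob n p P + gnp_prob n p (\<lambda>E. \<not> P E) = (\<Sum>E\<in>Pow (all_edges n). wt n p E)"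
    unfolding gnp_wt sum.distrib[symmetric] by (rule sum.cong) auto
  then show ?thesis using wt_total by simp
qed

lemma gnp_nonneg: "0 \<le> p \<Longrightarrow> p \<le> 1 \<Longrightarrow> 0 \<le> gnp_prob n p P"
  unfolding gnp_wt by (intro sum_nonneg) (auto simp: wt_nonneg)

lemma gnp_le1: "0 \<le> p \<Longrightarrow> p \<le> 1 \<Longrightarrow> gnp_prob n p P \<le> 1"
  using gnp_compl[of n p P] gnp_nonneg[of p n "\<lambda>E. \<not> P E"] by simp

lemma gnp_mono: assumes "0 \<le> p" "p \<le> 1" "\<And>E. E \<subseteq> all_edges n \<Longrightarrow> P E \<Longrightarrow> Q E"
  shows "gnp_prob n p P \<le> gnp_prob n p Q"
  unfolding gnp_wt by (intro sum_mono) (use assms wt_nonneg in auto)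

lemma gnp_union: assumes "0 \<le> p" "p \<le> 1" "finite F"
  shows "gnp_prob n p (\<lambda>E. \<exists>A\<in>F. Q A E) \<le> (\<Sum>A\<in>F. gnp_prob n p (Q A))"
proof -
  have "gnp_prob n p (\<lambda>E. \<exists>A\<in>F. Q A E) \<le>
     (\<Sum>E\<in>Pow (all_edges n). \<Sum>A\<in>F. if Q A E then wt n p E else 0)"
    unfolding gnp_wt
  proof (intro sum_mono)
    fix E
    show "(if \<exists>A\<in>F. Q A E then wt n p E else 0) \<le> (\<Sum>A\<in>F. if Q A E then wt n p E else 0)"
    proof (cases "\<exists>A\<in>F. Q A E")
      case True
      then obtain A where A: "A \<in> F" "Q A E" by blast
      have "(if Q A E then wt n p E else 0) \<le> (\<Sum>A\<in>F. if Q A E then wt n p E else 0)"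
        by (rule member_le_sum) (use A assms wt_nonneg in auto)
      then show ?thesis using A True by simp
    next
      case False
      then show ?thesis using assms wt_nonneg by (simp add: sum_nonneg)
    qed
  qed
  also have "\<dots> = (\<Sum>A\<in>F. gnp_prob n p (Q A))" unfolding gnp_wt by (rule sum.swap)
  finally show ?thesis .
qed

lemma gnp_tail: assumes p: "0 \<le> p" "p \<le> 1" and B: "B \<subseteq> all_edges n"
  shows "gnp_prob n p (\<lambda>E. real (card (E \<inter> B)) \<le> t) \<le> 2 powr t * (1 - p/2) ^ card B"
proof -
  define h where "h e = (if e \<in> B then 1/2 else (1::real))" for e
  have "gnp_prob n p (\<lambda>E. real (card (E \<inter> B)) \<le> t) \<le>
      (\<Sum>E\<in>Pow (all_edges n). 2 powr t * (wt n p E * (1/2) ^ card (E \<inter> B)))"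
    unfolding gnp_wt
  proof (intro sum_mono)
    fix E
    show "(if real (card (E \<inter> B)) \<le> t then wt n p E else 0) \<le> 2 powr t * (wt n p E * (1/2) ^ card (E \<inter> B))"
    proof (cases "real (card (E \<inter> B)) \<le> t")
      case True
      have "2 ^ card (E \<inter> B) \<le> 2 powr t"
        using True by (metis powr_mono powr_realpow one_le_numeral zero_less_numeral)
      then have "1 \<le> 2 powr t * (1/2) ^ card (E \<inter> B)"
        by (simp add: power_one_over field_simps)
      then have "wt n p E * 1 \<le> wt n p E * (2 powr t * (1/2) ^ card (E \<inter> B))"
        by (intro mult_left_mono) (use p wt_nonneg in auto)
      then show ?thesis using True by (simp add: algebra_simps)
    next
      case False
      then show ?thesis using p wt_nonneg by simp
    qed
  qed
  also have "\<dots> = 2 powr t * (\<Sum>E\<in>Pow (all_edges n). wt n p E * (1/2) ^ card (E \<inter> B))"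
    by (simp add: sum_distrib_left)
  also have "(\<Sum>E\<in>Pow (all_edges n). wt n p E * (1/2) ^ card (E \<inter> B)) =
       (\<Sum>E\<in>Pow (all_edges n). (\<Prod>e\<in>E. p * h e) * (\<Prod>e\<in>all_edges n - E. 1 - p))"
  proof (rule sum.cong)
    fix E assume E: "E \<in> Pow (all_edges n)"
    have fE: "finite E" using E finite_all_edges' finite_subset by blast
    have "(\<Prod>e\<in>E. h e) = (\<Prod>e\<in>E \<inter> B. 1/2)"
      using prod.inter_restrict[OF fE, of "\<lambda>_. 1/2::real" B] unfolding h_def by simp
    then have "(\<Prod>e\<in>E. h e) = (1/2) ^ card (E \<inter> B)" by simp
    then show "wt n p E * (1/2) ^ card (E \<inter> B) = (\<Prod>e\<in>E. p * h e) * (\<Prod>e\<in>all_edges n - E. 1 - p)"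
      using E by (simp add: wt_prod prod.distrib)
  qed simp
  also have "\<dots> = (\<Prod>e\<in>all_edges n. p * h e + (1 - p))"
    by (rule prod_add[symmetric]) (rule finite_all_edges')
  also have "\<dots> = (\<Prod>e\<in>all_edges n. if e \<in> B then 1 - p/2 else 1)"
    by (rule prod.cong) (auto simp: h_def)
  also have "\<dots> = (\<Prod>e\<in>all_edges n \<inter> B. 1 - p/2)"
    using prod.inter_restrict[OF finite_all_edges'[of n], of "\<lambda>_. 1 - p/2" B] by simp
  also have "\<dots> = (1 - p/2) ^ card B" using B by (simp add: Int_absorb1)
  finally show ?thesis by (simp add: mult_left_mono)
qed



lemma choose2_real: "real (s choose 2) = real s * (real s - 1) / 2"
proof -
  have ev: "even (s * (s - 1))" by (cases s) auto
  have "real (s choose 2) = real (s * (s - 1)) / 2"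
    using ev by (simp add: choose_two real_of_nat_div)
  then show ?thesis by (cases s) (auto simp: algebra_simps)
qed

definition A2 :: "nat \<Rightarrow> nat set \<Rightarrow> nat set set" where
  "A2 n A = {e \<in> all_edges n. e \<subseteq> A}"

lemma card_A2: assumes "A \<subseteq> {1..n}"
  shows "real (card (A2 n A)) = real (card A) * (real (card A) - 1) / 2"
proof -
  have "A2 n A = {B. B \<subseteq> A \<and> card B = 2}"
  proof (intro set_eqI iffI)
    fix x assume "x \<in> A2 n A"
    then show "x \<in> {B. B \<subseteq> A \<and> card B = 2}" unfolding A2_def all_edges_def by auto
  next
    fix x assume "x \<in> {B. B \<subseteq> A \<and> card B = 2}"
    then obtain a b where ab: "x = {a,b}" "a \<noteq> b" "x \<subseteq> A" by (auto simp: card_2_iff)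
    then have "a \<in> {1..n}" "b \<in> {1..n}" using assms by auto
    then show "x \<in> A2 n A" using ab unfolding A2_def all_edges_def by blast
  qed
  moreover have "finite A" using assms finite_subset by blast
  ultimately have "card (A2 n A) = card A choose 2" by (simp add: n_subsets)
  then show ?thesis by (simp add: choose2_real)
qed

lemma sum_pow_card: "(\<Sum>X\<in>Pow {1..n}. (y::real) ^ card X) = (1 + y) ^ n"
proof -
  have "(\<Prod>i\<in>{1..n}. y + 1) = (\<Sum>X\<in>Pow {1..n}. (\<Prod>i\<in>X. y) * (\<Prod>i\<in>{1..n} - X. 1))"
    by (rule prod_add) simp
  then show ?thesis by (simp add: add.commute)
qed

lemma bad_bound:
  assumes p: "0 < p" "p \<le> 1" and M: "M > 0"
  shows "gnp_prob n p (\<lambda>E. \<exists>A\<in>{A\<in>Pow {1..n}. M \<le> real (card A)}.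
            real (card (E \<inter> A2 n A)) \<le> T * real (card A))
         \<le> exp (real n * (2 powr T * exp (- p * (M - 1) / 4))) - 1"
proof -
  define y where "y = 2 powr T * exp (- p * (M - 1) / 4)"
  define F where "F = {A\<in>Pow {1..n}. M \<le> real (card A)}"
  have y0: "0 \<le> y" unfolding y_def by simp
  have "gnp_prob n p (\<lambda>E. \<exists>A\<in>F. real (card (E \<inter> A2 n A)) \<le> T * real (card A))
      \<le> (\<Sum>A\<in>F. gnp_prob n p (\<lambda>E. real (card (E \<inter> A2 n A)) \<le> T * real (card A)))"
    by (rule gnp_union) (use p in \<open>auto simp: F_def\<close>)
  also have "\<dots> \<le> (\<Sum>A\<in>F. y ^ card A)"
  proof (rule sum_mono)
    fix A assume A: "A \<in> F"
    define s where "s = real (card A)"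
    have sM: "M \<le> s" "0 \<le> s" using A unfolding F_def s_def by auto
    have A1: "A \<subseteq> {1..n}" using A unfolding F_def by auto
    have "gnp_prob n p (\<lambda>E. real (card (E \<inter> A2 n A)) \<le> T * real (card A))
       \<le> 2 powr (T * s) * (1 - p/2) ^ card (A2 n A)"
      unfolding s_def by (rule gnp_tail) (use p in \<open>auto simp: A2_def\<close>)
    also have "(1 - p/2) ^ card (A2 n A) \<le> exp (-p/2) ^ card (A2 n A)"
      by (rule power_mono) (use p exp_ge_add_one_self[of "-p/2"] in auto)
    also have "exp (-p/2) ^ card (A2 n A) = exp (-p/2 * real (card (A2 n A)))"
      by (simp add: exp_of_nat_mult[symmetric] mult.commute)
    also have "-p/2 * real (card (A2 n A)) = - p * (s * (s - 1)) / 4"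
      using card_A2[OF A1] unfolding s_def by simp
    also have "exp (- p * (s * (s - 1)) / 4) \<le> exp (- p * (M - 1) / 4) ^ card A"
    proof -
      have "s * (M - 1) \<le> s * (s - 1)" using sM by (intro mult_left_mono) auto
      then have h: "p * (s * (M - 1)) \<le> p * (s * (s - 1))"
        using p by (simp add: mult_left_mono)
      have e1: "- p * (M - 1) / 4 * s = - (p * (s * (M - 1))) / 4" by (simp add: algebra_simps)
      have e2: "- p * (s * (s - 1)) / 4 = - (p * (s * (s - 1))) / 4" by simp
      have "- p * (s * (s - 1)) / 4 \<le> - p * (M - 1) / 4 * s"
        unfolding e1 e2 using h by linarith
      then show ?thesis unfolding s_def by (simp add: exp_of_nat_mult[symmetric] mult.commute)
    qed
    also have "2 powr (T * s) = (2 powr T) ^ card A"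
      unfolding s_def by (simp add: powr_powr[symmetric] powr_realpow)
    finally show "gnp_prob n p (\<lambda>E. real (card (E \<inter> A2 n A)) \<le> T * real (card A)) \<le> y ^ card A"
      unfolding y_def by (simp add: power_mult_distrib mult_left_mono)
  qed
  also have "\<dots> \<le> (\<Sum>A\<in>Pow {1..n} - {{}}. y ^ card A)"
  proof (rule sum_mono2)
    show "F \<subseteq> Pow {1..n} - {{}}" using M unfolding F_def by auto
  qed (use y0 in auto)
  also have "\<dots> = (1 + y) ^ n - 1"
    using sum_pow_card[of y n] sum.remove[of "Pow {1..n}" "{}" "\<lambda>X. y ^ card X"]
    by (simp add: sum_diff1)
  also have "(1 + y) ^ n \<le> exp y ^ n"
    by (rule power_mono) (use y0 exp_ge_add_one_self[of y] in auto)
  also have "exp y ^ n = exp (real n * y)" by (simp add: exp_of_nat_mult)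
  finally show ?thesis unfolding y_def F_def by simp
qed


lemma exists_colourings:
  assumes EU: "E \<subseteq> all_edges n"
  shows "\<exists>k c. closed_cf_colouring E k c" "\<exists>k c. open_cf_colouring E k c"
proof -
  have fin: "finite E" using EU finite_all_edges finite_subset by blast
  obtain f and m :: nat where f: "f ` E = {i. i < m}" "inj_on f E"
    using finite_imp_inj_to_nat_seg[OF fin] by blast
  have lt: "\<forall>e\<in>E. f e < m"
  proof
    fix e assume "e \<in> E"
    then have "f e \<in> f ` E" by (rule imageI)
    then show "f e < m" using f(1) by simp
  qed
  have sing: "{g \<in> X. f g = f e} = {e}" if "e \<in> X" "X \<subseteq> E" for e X
    using that f(2) unfolding inj_on_def by blast
  have "closed_cf_colouring E m f"
    unfolding closed_cf_colouring_def
  proof (intro conjI ballI)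
    fix e assume e: "e \<in> E"
    then obtain u v where "e = {u,v}" using edge_form EU by blast
    then have "e \<in> closed_nbhd E e" using e unfolding closed_nbhd_def by auto
    moreover have "closed_nbhd E e \<subseteq> E" unfolding closed_nbhd_def by auto
    ultimately show "\<exists>col. card {g \<in> closed_nbhd E e. f g = col} = 1"
      using sing by (intro exI[of _ "f e"]) auto
  qed (use lt in auto)
  then show "\<exists>k c. closed_cf_colouring E k c" by blast
  have "open_cf_colouring E m f"
    unfolding open_cf_colouring_def
  proof (intro conjI ballI impI)
    fix e assume e: "e \<in> E" and ne: "open_nbhd E e \<noteq> {}"
    then obtain g where g: "g \<in> open_nbhd E e" by blast
    moreover have "open_nbhd E e \<subseteq> E" unfolding open_nbhd_def closed_nbhd_def by auto
    ultimately show "\<exists>col. card {g \<in> open_nbhd E e. f g = col} = 1"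
      using sing by (intro exI[of _ "f g"]) auto
  qed (use lt in auto)
  then show "\<exists>k c. open_cf_colouring E k c" by blast
qed

lemma per_n:
  fixes ch :: "nat set set \<Rightarrow> nat"
  assumes n: "n \<ge> 2" and p: "0 < p" "p \<le> 1"
    and T: "T = log 2 (p * real n) - 2 * log 2 (log 2 (real n))"
    and H: "\<And>E. E \<subseteq> all_edges n \<Longrightarrow> real (ch E) < T \<Longrightarrow>
               \<exists>c. closed_cf_colouring E (ch E) c \<or> open_cf_colouring E (ch E) c"
  shows "2 - exp (real n * (p * real n / (log 2 (real n))^2 * exp (- ((log 2 (real n))^2 - p) / 4)))
           \<le> gnp_prob n p (\<lambda>E. T \<le> real (ch E))"
proof -
  define L where "L = log 2 (real n)"
  have L1: "1 \<le> L" unfolding L_def using n by simp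
  define R where "R = p * real n / L^2"
  have pn: "0 < p * real n" using p n by simp
  have R0: "0 < R" unfolding R_def using pn L1 by simp
  have TR: "2 powr T = R"
  proof -
    have "2 powr T = 2 powr log 2 (p * real n) / 2 powr (2 * log 2 L)"
      unfolding T L_def by (simp add: powr_diff)
    also have "2 powr (2 * log 2 L) = (2 powr log 2 L) ^ 2"
      by (simp add: powr_realpow[symmetric] powr_powr mult.commute)
    also have "\<dots> = L ^ 2" using L1 by simp
    also have "2 powr log 2 (p * real n) = p * real n" using pn by simp
    finally show ?thesis unfolding R_def .
  qed
  define M where "M = L^2 / p"
  have M0: "0 < M" unfolding M_def using L1 p by simp
  have MR: "M * R = real n" unfolding M_def R_def using p L1 by (simp add: field_simps power2_eq_square)
  have pM: "p * (M - 1) = L^2 - p" unfolding M_def using p by (simp add: field_simps)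
  have "gnp_prob n p (\<lambda>E. \<not> T \<le> real (ch E)) \<le>
      gnp_prob n p (\<lambda>E. \<exists>A\<in>{A\<in>Pow {1..n}. M \<le> real (card A)}.
            real (card (E \<inter> A2 n A)) \<le> T * real (card A))"
  proof (rule gnp_mono)
    fix E assume EU: "E \<subseteq> all_edges n" and nT: "\<not> T \<le> real (ch E)"
    define k where "k = ch E"
    have kT: "real k < T" using nT unfolding k_def by simp
    obtain c where "closed_cf_colouring E k c \<or> open_cf_colouring E k c"
      using H[OF EU] kT unfolding k_def by blast
    from det_main[OF EU this] obtain A where A: "A \<subseteq> {1..n}" "real n \<le> real (card A) * 2 ^ k"
      "card {e\<in>E. e \<subseteq> A} \<le> k * card A" by blast
    have "(2::real) ^ k = 2 powr real k" by (simp add: powr_realpow)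
    also have "\<dots> \<le> 2 powr T" using kT by simp
    finally have "(2::real) ^ k \<le> R" using TR by simp
    then have "real n \<le> real (card A) * R" using A(2)
      by (meson mult_left_mono of_nat_0_le_iff order_trans)
    then have "M * R \<le> real (card A) * R" using MR by simp
    then have MA: "M \<le> real (card A)" using R0 by simp
    have "E \<inter> A2 n A = {e\<in>E. e \<subseteq> A}" using EU unfolding A2_def by auto
    then have "real (card (E \<inter> A2 n A)) \<le> real k * real (card A)" using A(3)
      by (metis of_nat_le_iff of_nat_mult)
    also have "\<dots> \<le> T * real (card A)" using kT by (intro mult_right_mono) auto
    finally show "\<exists>A\<in>{A\<in>Pow {1..n}. M \<le> real (card A)}.
            real (card (E \<inter> A2 n A)) \<le> T * real (card A)" using A(1) MA by blast
  qed (use p in auto)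
  also have "\<dots> \<le> exp (real n * (2 powr T * exp (- p * (M - 1) / 4))) - 1"
    by (rule bad_bound) (use p M0 in auto)
  also have "- p * (M - 1) / 4 = - (L^2 - p) / 4" using pM by simp
  finally have "gnp_prob n p (\<lambda>E. \<not> T \<le> real (ch E)) \<le> exp (real n * (R * exp (- (L^2 - p) / 4))) - 1"
    using TR by simp
  then show ?thesis using gnp_compl[of n p "\<lambda>E. T \<le> real (ch E)"] unfolding R_def L_def by simp
qed

lemma asym_bound:
  assumes n: "n \<ge> 2" and p: "0 < p" "p \<le> 1"
  shows "exp (real n * (p * real n / (log 2 (real n))^2 * exp (- ((log 2 (real n))^2 - p) / 4)))
     \<le> exp (exp (1/4) * real n ^ 2 * exp (- ((log 2 (real n))^2) / 4))"
proof -
  define L where "L = log 2 (real n)"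
  have L1: "1 \<le> L" unfolding L_def using n by simp
  have "p * real n / L^2 \<le> real n"
  proof -
    have "p * real n \<le> real n * L^2" using p L1
      by (metis mult_left_mono mult_right_mono mult.commute of_nat_0_le_iff one_le_power order_trans mult_1 less_imp_le)
    then show ?thesis using L1 by (simp add: divide_le_eq)
  qed
  moreover have "exp (- (L^2 - p) / 4) \<le> exp (1/4) * exp (- (L^2) / 4)"
    using p by (simp add: exp_add[symmetric] diff_divide_distrib)
  ultimately have "p * real n / L^2 * exp (- (L^2 - p) / 4) \<le> real n * (exp (1/4) * exp (- (L^2) / 4))"
    by (intro mult_mono) (use p in auto)
  then have "real n * (p * real n / L^2 * exp (- (L^2 - p) / 4)) \<le> real n * (real n * (exp (1/4) * exp (- (L^2) / 4)))"
    by (intro mult_left_mono) auto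
  moreover have "real n * (real n * (exp (1/4) * exp (- (L^2) / 4))) = exp (1/4) * real n ^ 2 * exp (- (L^2) / 4)"
    by (simp only: power2_eq_square mult_ac)
  ultimately have "real n * (p * real n / L^2 * exp (- (L^2 - p) / 4)) \<le> exp (1/4) * real n ^ 2 * exp (- (L^2) / 4)"
    by (rule ord_le_eq_trans)
  then show ?thesis unfolding L_def by (simp only: exp_le_cancel_iff)
qed

lemma g_lim: "(\<lambda>n::nat. exp (exp (1/4) * real n ^ 2 * exp (- ((log 2 (real n))^2) / 4)) - 1) \<longlonglongrightarrow> 0"
proof -
  have l1: "filterlim (\<lambda>x::real. 2 * x - x^2 / (4 * (ln 2)^2)) at_bot at_top"
    by real_asymp
  have l2: "filterlim (\<lambda>n::nat. ln (real n)) at_top sequentially"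
    by real_asymp
  have l3: "filterlim (\<lambda>n::nat. 2 * ln (real n) - (ln (real n))^2 / (4 * (ln 2)^2)) at_bot sequentially"
    using filterlim_compose[OF l1 l2] by simp
  have l4: "(\<lambda>n::nat. exp (2 * ln (real n) - (ln (real n))^2 / (4 * (ln 2)^2))) \<longlonglongrightarrow> 0"
    using filterlim_compose[OF exp_at_bot l3] by simp
  have ev: "eventually (\<lambda>n::nat. exp (2 * ln (real n) - (ln (real n))^2 / (4 * (ln 2)^2))
        = real n ^ 2 * exp (- ((log 2 (real n))^2) / 4)) sequentially"
    using eventually_ge_at_top[of "1::nat"]
  proof eventually_elim
    case (elim n)
    have "exp (2 * ln (real n)) = exp (ln (real n) + ln (real n))" by simp
    also have "\<dots> = exp (ln (real n)) * exp (ln (real n))" by (rule exp_add)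
    also have "\<dots> = real n ^ 2" using elim by (simp add: power2_eq_square)
    finally have "exp (2 * ln (real n)) = real n ^ 2" .
    moreover have "(ln (real n))^2 / (4 * (ln 2)^2) = (log 2 (real n))^2 / 4"
      unfolding log_def power_divide by (simp only: divide_divide_eq_left mult.commute)
    moreover have "exp (2 * ln (real n) - (ln (real n))^2 / (4 * (ln 2)^2)) =
        exp (2 * ln (real n)) * exp (- ((ln (real n))^2 / (4 * (ln 2)^2)))"
      by (simp only: diff_conv_add_uminus exp_add)
    ultimately show ?case by (simp only: minus_divide_left)
  qed
  have l5: "(\<lambda>n::nat. real n ^ 2 * exp (- ((log 2 (real n))^2) / 4)) \<longlonglongrightarrow> 0"
    using tendsto_cong[OF ev] l4 by simp
  have "(\<lambda>n::nat. exp (exp (1/4) * (real n ^ 2 * exp (- ((log 2 (real n))^2) / 4))) - 1) \<longlonglongrightarrow> exp (exp (1/4) * 0) - 1"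
    by (intro tendsto_intros l5)
  then show ?thesis by (simp add: mult.assoc)
qed

lemma final_limit:
  fixes p :: "nat \<Rightarrow> real" and ch :: "nat \<Rightarrow> nat set set \<Rightarrow> nat"
  assumes p01: "\<And>n. 0 \<le> p n \<and> p n \<le> 1"
    and lim: "filterlim (\<lambda>n. p n * real n / (log 2 (real n))^2) at_top sequentially"
    and H: "\<And>n E. E \<subseteq> all_edges n \<Longrightarrow>
        real (ch n E) < log 2 (p n * real n) - 2 * log 2 (log 2 (real n)) \<Longrightarrow>
        \<exists>c. closed_cf_colouring E (ch n E) c \<or> open_cf_colouring E (ch n E) c"
  shows "(\<lambda>n. gnp_prob n (p n) (\<lambda>E. real (ch n E) \<ge>
            log 2 (p n * real n) - 2 * log 2 (log 2 (real n)))) \<longlonglongrightarrow> 1"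
proof -
  define g where "g n = exp (exp (1/4) * real n ^ 2 * exp (- ((log 2 (real n))^2) / 4)) - 1" for n :: nat
  have g0: "g \<longlonglongrightarrow> 0" unfolding g_def by (rule g_lim)
  have ev1: "eventually (\<lambda>n. p n * real n / (log 2 (real n))^2 > 1) sequentially"
    using lim by (simp add: filterlim_at_top_dense)
  have ev2: "eventually (\<lambda>n::nat. n \<ge> 2) sequentially" by (rule eventually_ge_at_top)
  have low: "eventually (\<lambda>n. 1 - g n \<le> gnp_prob n (p n) (\<lambda>E. real (ch n E) \<ge>
            log 2 (p n * real n) - 2 * log 2 (log 2 (real n)))) sequentially"
    using ev1 ev2
  proof eventually_elim
    case (elim n)
    have "0 < p n * real n / (log 2 (real n))^2" using elim(1) by simp
    moreover have "0 < (log 2 (real n))^2"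
    proof -
      have "1 \<le> log 2 (real n)" using elim(2) by simp
      then show ?thesis by simp
    qed
    ultimately have "0 < p n * real n" by (simp add: zero_less_divide_iff)
    then have pp: "0 < p n" using p01[of n] by (simp add: zero_less_mult_iff)
    have "2 - exp (real n * (p n * real n / (log 2 (real n))^2 * exp (- ((log 2 (real n))^2 - p n) / 4)))
           \<le> gnp_prob n (p n) (\<lambda>E. log 2 (p n * real n) - 2 * log 2 (log 2 (real n)) \<le> real (ch n E))"
    proof (rule per_n[OF elim(2) pp])
      show "p n \<le> 1" using p01[of n] by simp
      fix E assume "E \<subseteq> all_edges n" "real (ch n E) < log 2 (p n * real n) - 2 * log 2 (log 2 (real n))"
      then show "\<exists>c. closed_cf_colouring E (ch n E) c \<or> open_cf_colouring E (ch n E) c" by (rule H)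
    qed (rule refl)
    moreover have "exp (real n * (p n * real n / (log 2 (real n))^2 * exp (- ((log 2 (real n))^2 - p n) / 4)))
     \<le> exp (exp (1/4) * real n ^ 2 * exp (- ((log 2 (real n))^2) / 4))"
      by (rule asym_bound[OF elim(2) pp]) (use p01 in auto)
    ultimately show ?case unfolding g_def by linarith
  qed
  have up: "eventually (\<lambda>n. gnp_prob n (p n) (\<lambda>E. real (ch n E) \<ge>
            log 2 (p n * real n) - 2 * log 2 (log 2 (real n))) \<le> 1) sequentially"
  proof (intro always_eventually allI)
    fix n
    show "gnp_prob n (p n) (\<lambda>E. real (ch n E) \<ge>
            log 2 (p n * real n) - 2 * log 2 (log 2 (real n))) \<le> 1"
      using p01[of n] by (intro gnp_le1) simp_all
  qed
  have lim1: "(\<lambda>n. 1 - g n) \<longlonglongrightarrow> 1"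
    using tendsto_diff[OF tendsto_const[of "1::real"] g0] by simp
  show ?thesis by (rule tendsto_sandwich[OF low up lim1 tendsto_const])
qed

theorem mainTheorem12:
  fixes p :: "nat \<Rightarrow> real"
  assumes "\<And>n. 0 \<le> p n \<and> p n \<le> 1"
    and "filterlim (\<lambda>n. p n * real n / (log 2 (real n))^2) at_top sequentially"
  shows "(\<lambda>n. gnp_prob n (p n) (\<lambda>E. real (chi_ccf E) \<ge>
            log 2 (p n * real n) - 2 * log 2 (log 2 (real n)))) \<longlonglongrightarrow> 1
       \<and> (\<lambda>n. gnp_prob n (p n) (\<lambda>E. real (chi_ocf E) \<ge>
            log 2 (p n * real n) - 2 * log 2 (log 2 (real n)))) \<longlonglongrightarrow> 1"
proof
  show "(\<lambda>n. gnp_prob n (p n) (\<lambda>E. real (chi_ccf E) \<ge>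
            log 2 (p n * real n) - 2 * log 2 (log 2 (real n)))) \<longlonglongrightarrow> 1"
  proof (rule final_limit[OF assms, where ch = "\<lambda>_. chi_ccf"])
    fix n E assume "E \<subseteq> all_edges (n::nat)"
    then have "\<exists>k c. closed_cf_colouring E k c" by (rule exists_colourings)
    then have "\<exists>c. closed_cf_colouring E (chi_ccf E) c"
      unfolding chi_ccf_def by (rule LeastI_ex)
    then show "\<exists>c. closed_cf_colouring E (chi_ccf E) c \<or> open_cf_colouring E (chi_ccf E) c" by blast
  qed
  show "(\<lambda>n. gnp_prob n (p n) (\<lambda>E. real (chi_ocf E) \<ge>
            log 2 (p n * real n) - 2 * log 2 (log 2 (real n)))) \<longlonglongrightarrow> 1"
  proof (rule final_limit[OF assms, where ch = "\<lambda>_. chi_ocf"])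
    fix n E assume "E \<subseteq> all_edges (n::nat)"
    then have "\<exists>k c. open_cf_colouring E k c" by (rule exists_colourings)
    then have "\<exists>c. open_cf_colouring E (chi_ocf E) c"
      unfolding chi_ocf_def by (rule LeastI_ex)
    then show "\<exists>c. closed_cf_colouring E (chi_ocf E) c \<or> open_cf_colouring E (chi_ocf E) c" by blast
  qed
qed

end
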